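(* In the standard LLP setup, for every $N\ge1$ and every $s\in\Sigma^*$: $f^N_{cons}(s)\subseteq f^{N+1}_{cons}(s)$.
   Context: Standard LLP setup. $\Sigma=\Sigma_c\,\dot\cup\,\Sigma_{uc}$ is a finite alphabet partitioned into controllable and uncontrollable events. The plant $G$ has generated language $L(G)$ and marked language $L_m(G)$ with $L(G)=\overline{L_m(G)}$ ($\overline{M}$ = set of prefixes of strings in $M$). The legal language $K\subseteq L_m(G)$ satisfies $K=\overline{K}\cap L_m(G)$. For a prefix-closed $L$, $M$ is controllable w.r.t. $L$ if $\overline{M}\Sigma_{uc}\cap L\subseteq\overline{M}$. For a language $L$ and $s\in\Sigma^*$: $L/s=\{t: st\in L\}$; $L|_N=\{t\in L:|t|\le N\}$. $M^{\uparrow/s|_N}$ is the supremal sublanguage of $M$ controllable w.r.t. $L(G)/s|_N$. Conservative attitude: $f^N_{cons}(s)=[K/s|_{N-1}]^{\uparrow/s|_N}$. *)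

theory Defs
  imports Main
begin

definition pre :: "'e list set \<Rightarrow> 'e list set" where
  "pre M = {t. \<exists>u. t @ u \<in> M}"

definition lquot :: "'e list set \<Rightarrow> 'e list \<Rightarrow> 'e list set" where
  "lquot L s = {t. s @ t \<in> L}"

definition trunc :: "'e list set \<Rightarrow> nat \<Rightarrow> 'e list set" where
  "trunc L N = {t \<in> L. length t \<le> N}"

definition controllable :: "'e set \<Rightarrow> 'e list set \<Rightarrow> 'e list set \<Rightarrow> bool" where
  "controllable Suc_set M L \<longleftrightarrow>
     {t @ [\<sigma>] | t \<sigma>. t \<in> pre M \<and> \<sigma> \<in> Suc_set} \<inter> L \<subseteq> pre M"

definition supC :: "'e set \<Rightarrow> 'e list set \<Rightarrow> 'e list set \<Rightarrow> 'e list set" where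
  "supC Suc_set M L = \<Union> {M'. M' \<subseteq> M \<and> controllable Suc_set M' L}"

definition f_cons :: "'e set \<Rightarrow> 'e list set \<Rightarrow> 'e list set \<Rightarrow> nat \<Rightarrow> 'e list \<Rightarrow> 'e list set" where
  "f_cons Suc_set LG K N s = supC Suc_set (trunc (lquot K s) (N - 1)) (trunc (lquot LG s) N)"

end

theory Submission
  imports Defs
begin

lemma ctrl_mono:
  assumes c: "controllable S M (trunc L N)"
    and sub: "M \<subseteq> trunc K (N - 1)" and N: "N \<ge> 1"
  shows "controllable S M (trunc L (N + 1))"
  unfolding controllable_def
proof
  fix x assume x: "x \<in> {t @ [\<sigma>] |t \<sigma>. t \<in> pre M \<and> \<sigma> \<in> S} \<inter> trunc L (N + 1)"
  then obtain t \<sigma> where tx: "x = t @ [\<sigma>]" "t \<in> pre M" "\<sigma> \<in> S" by blast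
  from tx(2) obtain u where "t @ u \<in> M" unfolding pre_def by blast
  with sub have "length t \<le> N - 1" unfolding trunc_def by auto
  with tx N x have "x \<in> trunc L N" unfolding trunc_def by auto
  with tx c show "x \<in> pre M" unfolding controllable_def by blast
qed

theorem mainTheorem7:
  fixes Sigma_uc :: "('e::finite) set"
    and Lm LG K :: "'e list set"
    and N :: nat and s :: "'e list"
  assumes "LG = pre Lm"
    and "K \<subseteq> Lm"
    and "K = pre K \<inter> Lm"
    and "N \<ge> 1"
  shows "f_cons Sigma_uc LG K N s \<subseteq> f_cons Sigma_uc LG K (N + 1) s"
  unfolding f_cons_def supC_def
proof (rule Union_mono, rule subsetI)
  fix M assume "M \<in> {M'. M' \<subseteq> trunc (lquot K s) (N - 1) \<and> controllable Sigma_uc M' (trunc (lquot LG s) N)}"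
  hence a: "M \<subseteq> trunc (lquot K s) (N - 1)" "controllable Sigma_uc M (trunc (lquot LG s) N)" by auto
  have "M \<subseteq> trunc (lquot K s) (N + 1 - 1)" using a(1) unfolding trunc_def by auto
  moreover have "controllable Sigma_uc M (trunc (lquot LG s) (N + 1))"
    using ctrl_mono[OF a(2) a(1) assms(4)] .
  ultimately show "M \<in> {M'. M' \<subseteq> trunc (lquot K s) (N + 1 - 1) \<and> controllable Sigma_uc M' (trunc (lquot LG s) (N + 1))}" by auto
qed

end
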